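(* Let $X\neq\emptyset$ be a countable set and let $F=(F_x)_{x\in X}$ be a family of finite-dimensional complex vector spaces. Let $A\colon \Gamma(X;F)\to\Gamma(X;F)$ be a continuous linear operator. Then the following are equivalent: (i) $A$ is surjective; (ii) the dual operator $A'\colon \Gamma_c(X;F')\to\Gamma_c(X;F')$ is injective.
   Context: $\Gamma(X;F)=\prod_{x\in X}F_x$ is the space of all maps $f$ on $X$ with $f(x)\in F_x$ for all $x$, equipped with the product topology (each $F_x$ carries its unique Hausdorff vector space topology); equivalently the locally convex topology generated by the seminorms $p_K(f)=\sum_{x\in K}\|f(x)\|_x$, $K\subseteq X$ finite, where $\|\cdot\|_x$ is a fixed norm on $F_x$. $\Gamma_c(X;F)$ is the subspace of $f$ vanishing outside a finite set. $F'=(F_x')_{x\in X}$ is the family of dual spaces. $\Gamma_c(X;F')$ is identified with the continuous dual of $\Gamma(X;F)$ via the pairing $(\varphi,f)=\sum_{x\in X}\varphi(x)(f(x))$. A linear operator $A$ on $\Gamma(X;F)$ is continuous iff for every $x\in X$ there is a finite $K\subseteq X$ such that $Af(x)$ depends only on $f|_K$. For continuous $A$, the dual operator $A'\colon\Gamma_c(X;F')\to\Gamma_c(X;F')$ is defined by $(A'\varphi,f)=(\varphi,Af)$ for all $f\in\Gamma(X;F)$, $\varphi\in\Gamma_c(X;F')$. *)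

theory Defs
  imports "HOL-Analysis.Analysis"
begin

text \<open>Each fibre F x is modelled as a finite-dimensional complex-linear subspace of the
  ambient complex vector space nat \<Rightarrow> complex (pointwise operations).  Every
  finite-dimensional complex vector space is isomorphic to such a subspace.  The ambient
  space carries the product topology, whose restriction to a finite-dimensional subspace is
  its unique Hausdorff vector space topology.\<close>

definition vadd :: "(nat \<Rightarrow> complex) \<Rightarrow> (nat \<Rightarrow> complex) \<Rightarrow> (nat \<Rightarrow> complex)" where
  "vadd u v = (\<lambda>i. u i + v i)"

definition cscale :: "complex \<Rightarrow> (nat \<Rightarrow> complex) \<Rightarrow> (nat \<Rightarrow> complex)" where
  "cscale c v = (\<lambda>i. c * v i)"

definition fd_csubspace :: "(nat \<Rightarrow> complex) set \<Rightarrow> bool" where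
  "fd_csubspace S \<longleftrightarrow>
     (\<lambda>_. 0) \<in> S \<and> (\<forall>u\<in>S. \<forall>v\<in>S. vadd u v \<in> S) \<and> (\<forall>c. \<forall>v\<in>S. cscale c v \<in> S) \<and>
     (\<exists>B. finite B \<and> B \<subseteq> S \<and> S = {(\<lambda>i. \<Sum>b\<in>B. c b * b i) | c. True})"

definition Gamma_sec :: "'x set \<Rightarrow> ('x \<Rightarrow> (nat \<Rightarrow> complex) set) \<Rightarrow> ('x \<Rightarrow> nat \<Rightarrow> complex) set" where
  "Gamma_sec X F = PiE X F"

definition sect_top :: "'x set \<Rightarrow> ('x \<Rightarrow> (nat \<Rightarrow> complex) set) \<Rightarrow> ('x \<Rightarrow> nat \<Rightarrow> complex) topology" where
  "sect_top X F = product_topology (\<lambda>x. subtopology euclidean (F x)) X"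

definition lin_op :: "'x set \<Rightarrow> ('x \<Rightarrow> (nat \<Rightarrow> complex) set)
    \<Rightarrow> (('x \<Rightarrow> nat \<Rightarrow> complex) \<Rightarrow> ('x \<Rightarrow> nat \<Rightarrow> complex)) \<Rightarrow> bool" where
  "lin_op X F A \<longleftrightarrow>
     A \<in> Gamma_sec X F \<rightarrow> Gamma_sec X F \<and>
     (\<forall>f\<in>Gamma_sec X F. \<forall>g\<in>Gamma_sec X F.
        A (\<lambda>x\<in>X. vadd (f x) (g x)) = (\<lambda>x\<in>X. vadd (A f x) (A g x))) \<and>
     (\<forall>c. \<forall>f\<in>Gamma_sec X F. A (\<lambda>x\<in>X. cscale c (f x)) = (\<lambda>x\<in>X. cscale c (A f x)))"

text \<open>An element of the dual F_x' is a complex-linear functional on F x; it is represented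
  canonically by its extension by 0 outside F x.\<close>
definition lin_functional :: "(nat \<Rightarrow> complex) set \<Rightarrow> ((nat \<Rightarrow> complex) \<Rightarrow> complex) \<Rightarrow> bool" where
  "lin_functional S l \<longleftrightarrow>
     (\<forall>u\<in>S. \<forall>v\<in>S. l (vadd u v) = l u + l v) \<and> (\<forall>c. \<forall>v\<in>S. l (cscale c v) = c * l v) \<and>
     (\<forall>v. v \<notin> S \<longrightarrow> l v = 0)"

definition Gamma_c_dual :: "'x set \<Rightarrow> ('x \<Rightarrow> (nat \<Rightarrow> complex) set)
    \<Rightarrow> ('x \<Rightarrow> (nat \<Rightarrow> complex) \<Rightarrow> complex) set" where
  "Gamma_c_dual X F = {\<phi>. (\<forall>x. x \<notin> X \<longrightarrow> \<phi> x = (\<lambda>_. 0)) \<and>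
       (\<forall>x\<in>X. lin_functional (F x) (\<phi> x)) \<and> finite {x. \<phi> x \<noteq> (\<lambda>_. 0)}}"

definition pairing :: "'x set \<Rightarrow> ('x \<Rightarrow> (nat \<Rightarrow> complex) \<Rightarrow> complex) \<Rightarrow> ('x \<Rightarrow> nat \<Rightarrow> complex) \<Rightarrow> complex" where
  "pairing X \<phi> f = (\<Sum>x\<in>{x\<in>X. \<phi> x \<noteq> (\<lambda>_. 0)}. \<phi> x (f x))"

definition dual_op :: "'x set \<Rightarrow> ('x \<Rightarrow> (nat \<Rightarrow> complex) set)
    \<Rightarrow> (('x \<Rightarrow> nat \<Rightarrow> complex) \<Rightarrow> ('x \<Rightarrow> nat \<Rightarrow> complex))
    \<Rightarrow> ('x \<Rightarrow> (nat \<Rightarrow> complex) \<Rightarrow> complex) \<Rightarrow> ('x \<Rightarrow> (nat \<Rightarrow> complex) \<Rightarrow> complex)" where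
  "dual_op X F A \<phi> = (THE \<psi>. \<psi> \<in> Gamma_c_dual X F \<and>
       (\<forall>f\<in>Gamma_sec X F. pairing X \<psi> f = pairing X \<phi> (A f)))"

end

theory Submission
  imports Defs "HOL-Library.Function_Algebras"
begin


definition sc1 :: "complex \<Rightarrow> ('a \<Rightarrow> complex) \<Rightarrow> ('a \<Rightarrow> complex)" where
  "sc1 c v = (\<lambda>i. c * v i)"

definition sc2 :: "complex \<Rightarrow> ('x \<Rightarrow> 'a \<Rightarrow> complex) \<Rightarrow> ('x \<Rightarrow> 'a \<Rightarrow> complex)" where
  "sc2 c f = (\<lambda>x. sc1 c (f x))"

lemma sc1_apply: "sc1 c v i = c * v i" by (simp add: sc1_def)
lemma sc2_apply: "sc2 c f x = sc1 c (f x)" by (simp add: sc2_def)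

lemma sum_app: "(sum f A) x = (\<Sum>a\<in>A. f a x)"
  by (induction A rule: infinite_finite_induct) auto

lemma vs1: "vector_space (sc1 :: complex \<Rightarrow> ('a \<Rightarrow> complex) \<Rightarrow> _)"
  by unfold_locales (auto simp: fun_eq_iff algebra_simps sc1_apply sc2_apply)

lemma vs2: "vector_space (sc2 :: complex \<Rightarrow> ('x \<Rightarrow> 'a \<Rightarrow> complex) \<Rightarrow> _)"
  by unfold_locales (auto simp: fun_eq_iff algebra_simps sc1_apply sc2_apply)

lemma vsc: "vector_space ((*) :: complex \<Rightarrow> complex \<Rightarrow> complex)"
  by unfold_locales (auto simp: algebra_simps)

interpretation V1: vector_space "sc1 :: complex \<Rightarrow> ('a \<Rightarrow> complex) \<Rightarrow> _" by (rule vs1)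
interpretation V2: vector_space "sc2 :: complex \<Rightarrow> ('x \<Rightarrow> 'a \<Rightarrow> complex) \<Rightarrow> _" by (rule vs2)
interpretation V12: vector_space_pair "sc1 :: complex \<Rightarrow> ('a \<Rightarrow> complex) \<Rightarrow> _" "sc2 :: complex \<Rightarrow> ('x \<Rightarrow> 'a \<Rightarrow> complex) \<Rightarrow> _"
  by unfold_locales
interpretation V2C: vector_space_pair "sc2 :: complex \<Rightarrow> ('x \<Rightarrow> 'a \<Rightarrow> complex) \<Rightarrow> _" "(*) :: complex \<Rightarrow> complex \<Rightarrow> complex"
  by unfold_locales

lemma vadd_eq: "vadd u v = u + v" by (simp add: vadd_def fun_eq_iff)
lemma cscale_eq: "cscale c v = sc1 c v" by (simp add: cscale_def fun_eq_iff sc1_apply)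

lemma fd_span:
  assumes "fd_csubspace S"
  shows "\<exists>B. finite B \<and> S = V1.span B"
proof -
  from assms obtain B where B: "finite B" "S = {(\<lambda>i. \<Sum>b\<in>B. c b * b i) | c. True}"
    unfolding fd_csubspace_def by blast
  have "V1.span B = range (\<lambda>u. \<Sum>v\<in>B. sc1 (u v) v)" by (rule V1.span_finite[OF B(1)])
  also have "(\<lambda>u. \<Sum>v\<in>B. sc1 (u v) v) = (\<lambda>c. (\<lambda>i. \<Sum>b\<in>B. c b * b i))"
    by (auto simp: fun_eq_iff sum_app sc1_apply)
  also have "range (\<lambda>c. (\<lambda>i. \<Sum>b\<in>B. c b * b i)) = S" by (auto simp: B(2))
  finally show ?thesis using B by auto
qed

lemma fd_subspace: "fd_csubspace S \<Longrightarrow> V1.subspace S"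
  using fd_span V1.subspace_span by blast



lemma finite_coords:
  fixes B :: "('a \<Rightarrow> complex) set"
  assumes "finite B"
  shows "\<exists>I. finite I \<and> (\<forall>v\<in>V1.span B. (\<forall>i\<in>I. v i = 0) \<longrightarrow> v = 0)"
  using assms
proof (induction B rule: finite_induct)
  case empty
  show ?case by (intro exI[of _ "{}"]) (simp add: V1.span_empty)
next
  case (insert b B)
  then obtain I where I: "finite I" "\<And>v. v \<in> V1.span B \<Longrightarrow> (\<forall>i\<in>I. v i = 0) \<Longrightarrow> v = 0" by blast
  show ?case
  proof (cases "b \<in> V1.span B")
    case True
    then show ?thesis using I by (simp only: V1.span_redundant[OF True]) blast
  next
    case nb: False
    show ?thesis
    proof (cases "\<exists>s\<in>V1.span B. \<forall>i\<in>I. s i = b i")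
      case True
      then obtain s where s: "s \<in> V1.span B" "\<forall>i\<in>I. s i = b i" by blast
      have "b \<noteq> s" using nb s by auto
      then obtain j where j: "b j \<noteq> s j" by (auto simp: fun_eq_iff)
      show ?thesis
      proof (intro exI[of _ "insert j I"] conjI ballI impI)
        show "finite (insert j I)" using I by auto
        fix v assume v: "v \<in> V1.span (insert b B)" and z: "\<forall>i\<in>insert j I. v i = 0"
        then obtain k where k: "v - sc1 k b \<in> V1.span B" by (auto simp: V1.span_insert)
        have "(v - sc1 k b) + sc1 k s \<in> V1.span B"
          using k s V1.span_add V1.span_scale by blast
        moreover have "\<forall>i\<in>I. ((v - sc1 k b) + sc1 k s) i = 0" using z s by (auto simp: sc1_apply)
        ultimately have e: "(v - sc1 k b) + sc1 k s = 0" using I by blast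
        have "v j - k * b j + k * s j = 0" using fun_cong[OF e, of j] by (simp add: sc1_apply)
        moreover have "v j = 0" using z by simp
        ultimately have "k * (b j - s j) = 0" by algebra
        then have "k = 0" using j by auto
        then show "v = 0" using e by (simp add: fun_eq_iff sc1_apply)
      qed
    next
      case False
      show ?thesis
      proof (intro exI[of _ I] conjI ballI impI)
        show "finite I" by fact
        fix v assume v: "v \<in> V1.span (insert b B)" and z: "\<forall>i\<in>I. v i = 0"
        then obtain k where k: "v - sc1 k b \<in> V1.span B" by (auto simp: V1.span_insert)
        have "k = 0"
        proof (rule ccontr)
          assume "k \<noteq> 0"
          have "sc1 (- inverse k) (v - sc1 k b) \<in> V1.span B" using k V1.span_scale by blast
          moreover have "\<forall>i\<in>I. sc1 (- inverse k) (v - sc1 k b) i = b i"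
            using z \<open>k \<noteq> 0\<close> by (simp add: algebra_simps sc1_apply)
          ultimately show False using False by blast
        qed
        then have "v \<in> V1.span B" using k by (simp add: fun_eq_iff sc1_apply)
        then show "v = 0" using I z by blast
      qed
    qed
  qed
qed



locale S2 =
  fixes X :: "'x set" and F :: "'x \<Rightarrow> (nat \<Rightarrow> complex) set"
    and A :: "('x \<Rightarrow> nat \<Rightarrow> complex) \<Rightarrow> ('x \<Rightarrow> nat \<Rightarrow> complex)"
  assumes fd: "\<And>x. x \<in> X \<Longrightarrow> fd_csubspace (F x)"
    and lin: "lin_op X F A"
    and cont: "continuous_map (sect_top X F) (sect_top X F) A"
begin

definition U :: "('x \<Rightarrow> nat \<Rightarrow> complex) set" where
  "U = {f. (\<forall>x\<in>X. f x \<in> F x) \<and> (\<forall>x. x \<notin> X \<longrightarrow> f x = 0)}"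

definition Bop :: "('x \<Rightarrow> nat \<Rightarrow> complex) \<Rightarrow> ('x \<Rightarrow> nat \<Rightarrow> complex)" where
  "Bop f = (\<lambda>x. if x \<in> X then A (restrict f X) x else 0)"

lemma Fsub: "x \<in> X \<Longrightarrow> V1.subspace (F x)"
  using fd fd_subspace by blast

lemma F0: "x \<in> X \<Longrightarrow> 0 \<in> F x"
  using Fsub V1.subspace_0 by blast

lemma Fadd: "x \<in> X \<Longrightarrow> u \<in> F x \<Longrightarrow> v \<in> F x \<Longrightarrow> u + v \<in> F x"
  using Fsub V1.subspace_add by blast

lemma Fscale: "x \<in> X \<Longrightarrow> v \<in> F x \<Longrightarrow> sc1 c v \<in> F x"
  using Fsub V1.subspace_scale by blast

lemma cscale0: "cscale 0 v = 0"
  by (simp add: cscale_def fun_eq_iff)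

lemma A_Gamma: "f \<in> Gamma_sec X F \<Longrightarrow> A f \<in> Gamma_sec X F"
  using lin unfolding lin_op_def by blast

lemma A_add: "f \<in> Gamma_sec X F \<Longrightarrow> g \<in> Gamma_sec X F \<Longrightarrow>
    A (\<lambda>x\<in>X. f x + g x) = (\<lambda>x\<in>X. A f x + A g x)"
  using lin unfolding lin_op_def vadd_eq by blast

lemma A_scale: "f \<in> Gamma_sec X F \<Longrightarrow> A (\<lambda>x\<in>X. sc1 c (f x)) = (\<lambda>x\<in>X. sc1 c (A f x))"
  using lin unfolding lin_op_def cscale_eq by blast

lemma z0_Gamma: "(\<lambda>x\<in>X. 0) \<in> Gamma_sec X F"
  by (auto simp: Gamma_sec_def F0)

lemma A_zero: "A (\<lambda>x\<in>X. 0) = (\<lambda>x\<in>X. 0)"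
proof -
  have "A (\<lambda>x\<in>X. sc1 0 ((\<lambda>x\<in>X. 0) x)) = (\<lambda>x\<in>X. sc1 0 (A (\<lambda>x\<in>X. 0) x))"
    using A_scale[OF z0_Gamma] by blast
  moreover have "(\<lambda>x\<in>X. sc1 0 ((\<lambda>x\<in>X. (0::nat\<Rightarrow>complex)) x)) = (\<lambda>x\<in>X. 0)"
    by (auto simp: fun_eq_iff sc1_apply)
  moreover have "(\<lambda>x\<in>X. sc1 0 (A (\<lambda>x\<in>X. 0) x)) = (\<lambda>x\<in>X. (0::nat\<Rightarrow>complex))"
    by (auto simp: fun_eq_iff sc1_apply)
  ultimately show ?thesis by simp
qed

lemma restrict_U: "f \<in> U \<Longrightarrow> restrict f X \<in> Gamma_sec X F"
  by (auto simp: U_def Gamma_sec_def)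

definition zext :: "('x \<Rightarrow> nat \<Rightarrow> complex) \<Rightarrow> ('x \<Rightarrow> nat \<Rightarrow> complex)" where
  "zext g = (\<lambda>x. if x \<in> X then g x else 0)"

lemma zext_U: "g \<in> Gamma_sec X F \<Longrightarrow> zext g \<in> U"
  by (auto simp: U_def Gamma_sec_def zext_def)

lemma restrict_zext: "g \<in> Gamma_sec X F \<Longrightarrow> restrict (zext g) X = g"
  by (auto simp: Gamma_sec_def zext_def fun_eq_iff PiE_def extensional_def)

lemma U_subspace: "V2.subspace U"
  unfolding V2.subspace_def U_def
  by (auto simp: sc2_apply F0 Fadd Fscale fun_eq_iff sc1_apply)

lemma U_add: "f \<in> U \<Longrightarrow> g \<in> U \<Longrightarrow> f + g \<in> U"
  using U_subspace V2.subspace_add by blast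
lemma U_scale: "f \<in> U \<Longrightarrow> sc2 c f \<in> U"
  using U_subspace V2.subspace_scale by blast
lemma U_diff: "f \<in> U \<Longrightarrow> g \<in> U \<Longrightarrow> f - g \<in> U"
  using U_subspace V2.subspace_diff by blast
lemma U_0: "0 \<in> U"
  using U_subspace V2.subspace_0 by blast
lemma U_sum: "(\<And>i. i \<in> I \<Longrightarrow> f i \<in> U) \<Longrightarrow> sum f I \<in> U"
  using U_subspace V2.subspace_sum by blast

lemma Bop_U: "f \<in> U \<Longrightarrow> Bop f \<in> U"
  using A_Gamma[OF restrict_U] by (auto simp: U_def Bop_def Gamma_sec_def)

lemma Bop_apply: "x \<in> X \<Longrightarrow> Bop f x = A (restrict f X) x"
  by (simp add: Bop_def)

lemma Bop_add: "f \<in> U \<Longrightarrow> g \<in> U \<Longrightarrow> Bop (f + g) = Bop f + Bop g"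
proof -
  assume f: "f \<in> U" and g: "g \<in> U"
  have "restrict (f + g) X = (\<lambda>x\<in>X. restrict f X x + restrict g X x)"
    by (auto simp: fun_eq_iff)
  then have "A (restrict (f + g) X) = (\<lambda>x\<in>X. A (restrict f X) x + A (restrict g X) x)"
    using A_add[OF restrict_U[OF f] restrict_U[OF g]] by simp
  then show ?thesis by (auto simp: Bop_def fun_eq_iff)
qed

lemma Bop_scale: "f \<in> U \<Longrightarrow> Bop (sc2 c f) = sc2 c (Bop f)"
proof -
  assume f: "f \<in> U"
  have "restrict (sc2 c f) X = (\<lambda>x\<in>X. sc1 c (restrict f X x))"
    by (auto simp: fun_eq_iff sc2_apply)
  then have "A (restrict (sc2 c f) X) = (\<lambda>x\<in>X. sc1 c (A (restrict f X) x))"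
    using A_scale[OF restrict_U[OF f]] by simp
  then show ?thesis by (auto simp: Bop_def fun_eq_iff sc2_apply sc1_apply)
qed

lemma Bop_0: "Bop 0 = 0"
  using Bop_scale[OF U_0, of 0] by (simp add: fun_eq_iff sc2_apply sc1_apply)

lemma Bop_diff: "f \<in> U \<Longrightarrow> g \<in> U \<Longrightarrow> Bop (f - g) = Bop f - Bop g"
proof -
  assume f: "f \<in> U" and g: "g \<in> U"
  have "Bop (f - g) + Bop g = Bop f"
    using Bop_add[OF U_diff[OF f g] g] by simp
  then show ?thesis by (simp add: eq_diff_eq)
qed

lemma Bop_sum: "(\<And>i. i \<in> I \<Longrightarrow> f i \<in> U) \<Longrightarrow> Bop (sum f I) = (\<Sum>i\<in>I. Bop (f i))"
proof (induction I rule: infinite_finite_induct)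
  case (infinite I) then show ?case by (metis Bop_0 sum.infinite)
next
  case empty then show ?case by (simp only: sum.empty Bop_0)
next
  case (insert i I)
  have "Bop (sum f (insert i I)) = Bop (f i + sum f I)"
    by (simp only: sum.insert[OF insert.hyps(1,2)])
  also have "\<dots> = Bop (f i) + Bop (sum f I)"
    using insert.prems by (intro Bop_add U_sum) auto
  also have "\<dots> = Bop (f i) + (\<Sum>i\<in>I. Bop (f i))"
    using insert.IH insert.prems by simp
  also have "\<dots> = (\<Sum>i\<in>insert i I. Bop (f i))"
    by (simp only: sum.insert[OF insert.hyps(1,2)])
  finally show ?case .
qed

lemma topspace_T: "topspace (sect_top X F) = Gamma_sec X F"
  by (simp add: sect_top_def Gamma_sec_def)

lemma coord_dep:
  assumes x: "x \<in> X"
  shows "\<exists>K. finite K \<and> K \<subseteq> X \<and> (\<forall>f\<in>Gamma_sec X F. (\<forall>z\<in>K. f z = 0) \<longrightarrow> A f x i = 0)"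
proof -
  let ?T = "sect_top X F"
  have c1: "continuous_map ?T (subtopology euclidean (F x)) (\<lambda>f. A f x)"
    using continuous_map_compose[OF cont[unfolded sect_top_def] continuous_map_product_projection[OF x, of "\<lambda>x. subtopology euclidean (F x)"]]
    unfolding sect_top_def by (simp add: o_def)
  then have c1': "continuous_map ?T euclidean (\<lambda>f. A f x)"
    using continuous_map_in_subtopology by blast
  have cp: "continuous_map (euclidean :: (nat \<Rightarrow> complex) topology) euclidean (\<lambda>v. v i)"
    using continuous_map_product_projection[of i UNIV "\<lambda>i. (euclidean :: complex topology)"]
    by (simp add: euclidean_product_topology)
  have c2: "continuous_map ?T euclidean (\<lambda>f. A f x i)"
    using continuous_map_compose[OF c1' cp] by (simp add: o_def)
  have op: "openin ?T {f \<in> topspace ?T. A f x i \<in> ball 0 1}"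
  proof -
    have "openin euclidean (ball (0::complex) 1)" by (metis open_ball open_openin)
    from openin_continuous_map_preimage[OF c2 this] show ?thesis .
  qed
  have z0in: "(\<lambda>z\<in>X. 0) \<in> {f \<in> topspace ?T. A f x i \<in> ball 0 1}"
    using z0_Gamma A_zero x by (simp add: topspace_T)
  obtain Uo where Uo: "finite {j \<in> X. Uo j \<noteq> topspace (subtopology euclidean (F j))}"
      "\<forall>j\<in>X. openin (subtopology euclidean (F j)) (Uo j)"
      "(\<lambda>z\<in>X. 0) \<in> Pi\<^sub>E X Uo" "Pi\<^sub>E X Uo \<subseteq> {f \<in> topspace ?T. A f x i \<in> ball 0 1}"
  proof -
    have "\<forall>y\<in>{f \<in> topspace ?T. A f x i \<in> ball 0 1}. \<exists>U. finite {j \<in> X. U j \<noteq> topspace (subtopology euclidean (F j))} \<and>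
       (\<forall>j\<in>X. openin (subtopology euclidean (F j)) (U j)) \<and> y \<in> Pi\<^sub>E X U \<and> Pi\<^sub>E X U \<subseteq> {f \<in> topspace ?T. A f x i \<in> ball 0 1}"
      using op unfolding sect_top_def by (subst (asm) openin_product_topology_alt)
    from bspec[OF this z0in] show ?thesis using that by blast
  qed
  define K where "K = {j \<in> X. Uo j \<noteq> topspace (subtopology euclidean (F j))}"
  have KF: "j \<in> X \<Longrightarrow> j \<notin> K \<Longrightarrow> Uo j = F j" for j by (simp add: K_def)
  show ?thesis
  proof (intro exI[of _ K] conjI ballI impI)
    show "finite K" using Uo(1) K_def by simp
    show "K \<subseteq> X" by (auto simp: K_def)
    fix f assume f: "f \<in> Gamma_sec X F" and fz: "\<forall>z\<in>K. f z = 0"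
    show "A f x i = 0"
    proof (rule ccontr)
      assume a: "A f x i \<noteq> 0"
      define t where "t = inverse (A f x i)"
      define ft where "ft = (\<lambda>z\<in>X. sc1 t (f z))"
      have "ft \<in> Pi\<^sub>E X Uo"
      proof -
        have "ft z \<in> Uo z" if z: "z \<in> X" for z
        proof (cases "z \<in> K")
          case True
          then have "ft z = 0" using fz z by (simp add: ft_def fun_eq_iff sc1_apply)
          then show ?thesis using Uo(3) z by (metis PiE_E restrict_apply')
        next
          case False
          then show ?thesis using KF[OF z False] Fscale[OF z PiE_mem[OF f[unfolded Gamma_sec_def] z]] z by (simp add: ft_def)
        qed
        then show ?thesis by (auto simp: ft_def)
      qed
      then have "A ft x i \<in> ball 0 1" using Uo(4) by blast
      moreover have "A ft x i = t * A f x i"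
        using A_scale[OF f, of t] x by (simp add: ft_def sc1_apply)
      moreover have "t * A f x i = 1" using a by (simp add: t_def)
      ultimately show False by simp
    qed
  qed
qed

lemma dep:
  assumes x: "x \<in> X"
  shows "\<exists>K. finite K \<and> K \<subseteq> X \<and> (\<forall>f\<in>U. (\<forall>z\<in>K. f z = 0) \<longrightarrow> Bop f x = 0)"
proof -
  obtain Bx where Bx: "finite Bx" "F x = V1.span Bx" using fd_span fd x by blast
  obtain I where I: "finite I" "\<And>v. v \<in> V1.span Bx \<Longrightarrow> (\<forall>i\<in>I. v i = 0) \<Longrightarrow> v = 0"
    using finite_coords[OF Bx(1)] by blast
  have "\<forall>i\<in>I. \<exists>K. finite K \<and> K \<subseteq> X \<and> (\<forall>f\<in>Gamma_sec X F. (\<forall>z\<in>K. f z = 0) \<longrightarrow> A f x i = 0)"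
    using coord_dep[OF x] by blast
  then obtain Kf where Kf: "\<And>i. i \<in> I \<Longrightarrow> finite (Kf i) \<and> Kf i \<subseteq> X \<and>
      (\<forall>f\<in>Gamma_sec X F. (\<forall>z\<in>Kf i. f z = 0) \<longrightarrow> A f x i = 0)"
    by metis
  show ?thesis
  proof (intro exI[of _ "\<Union>i\<in>I. Kf i"] conjI ballI impI)
    show "finite (\<Union>i\<in>I. Kf i)" using I(1) Kf by blast
    show "(\<Union>i\<in>I. Kf i) \<subseteq> X" using Kf by blast
    fix f assume f: "f \<in> U" and fz: "\<forall>z\<in>(\<Union>i\<in>I. Kf i). f z = 0"
    have g: "restrict f X \<in> Gamma_sec X F" using restrict_U[OF f] .
    have "A (restrict f X) x i = 0" if i: "i \<in> I" for i
    proof -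
      have "\<forall>z\<in>Kf i. restrict f X z = 0" using fz i Kf[OF i] by auto
      then show ?thesis using Kf[OF i] g by blast
    qed
    moreover have "A (restrict f X) x \<in> V1.span Bx"
      using A_Gamma[OF g] x Bx(2) by (auto simp: Gamma_sec_def)
    ultimately have "A (restrict f X) x = 0" using I(2) by blast
    then show "Bop f x = 0" using x by (simp add: Bop_def)
  qed
qed

definition Kd :: "'x \<Rightarrow> 'x set" where
  "Kd x = (SOME K. finite K \<and> K \<subseteq> X \<and> (\<forall>f\<in>U. (\<forall>z\<in>K. f z = 0) \<longrightarrow> Bop f x = 0))"

lemma Kd: assumes "x \<in> X"
  shows "finite (Kd x)" "Kd x \<subseteq> X" "\<And>f. f \<in> U \<Longrightarrow> (\<forall>z\<in>Kd x. f z = 0) \<Longrightarrow> Bop f x = 0"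
  using someI_ex[OF dep[OF assms]] unfolding Kd_def by blast+

lemma Kd_agree:
  assumes "x \<in> X" "f \<in> U" "g \<in> U" "\<forall>z\<in>Kd x. f z = g z"
  shows "Bop f x = Bop g x"
proof -
  have "Bop (f - g) x = 0" using Kd(3)[OF assms(1) U_diff[OF assms(2,3)]] assms(4) by simp
  then show ?thesis using Bop_diff[OF assms(2,3)] by simp
qed

end



definition sgl :: "'x \<Rightarrow> (nat \<Rightarrow> complex) \<Rightarrow> ('x \<Rightarrow> nat \<Rightarrow> complex)" where
  "sgl x v = (\<lambda>z. if z = x then v else 0)"

lemma sgl_add: "sgl x (u + v) = sgl x u + sgl x v"
  by (rule ext) (simp add: sgl_def)

lemma sgl_scale: "sgl x (sc1 c v) = sc2 c (sgl x v)"
  by (rule ext) (simp add: sgl_def sc2_apply fun_eq_iff sc1_apply)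

lemma sum_sgl: "finite P \<Longrightarrow> (\<Sum>x\<in>P. sgl x (h x)) w = (if w \<in> P then h w else 0)"
  by (simp add: sum_app sgl_def if_distrib cong: if_cong)

context S2
begin

lemma sgl_U: "x \<in> X \<Longrightarrow> v \<in> F x \<Longrightarrow> sgl x v \<in> U"
  by (auto simp: U_def sgl_def F0)

lemma gcd_out: "\<phi> \<in> Gamma_c_dual X F \<Longrightarrow> x \<notin> X \<Longrightarrow> \<phi> x = (\<lambda>_. 0)"
  by (simp add: Gamma_c_dual_def)

lemma gcd_fin: "\<phi> \<in> Gamma_c_dual X F \<Longrightarrow> finite {x\<in>X. \<phi> x \<noteq> (\<lambda>_. 0)}"
  by (simp add: Gamma_c_dual_def)

lemma gcd_lin: "\<phi> \<in> Gamma_c_dual X F \<Longrightarrow> x \<in> X \<Longrightarrow> lin_functional (F x) (\<phi> x)"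
  by (simp add: Gamma_c_dual_def)

lemma gcd_add: "\<phi> \<in> Gamma_c_dual X F \<Longrightarrow> u \<in> F x \<Longrightarrow> v \<in> F x \<Longrightarrow> \<phi> x (u + v) = \<phi> x u + \<phi> x v"
  by (cases "x \<in> X") (auto simp: gcd_out dest!: gcd_lin simp: lin_functional_def vadd_eq)

lemma gcd_scale: "\<phi> \<in> Gamma_c_dual X F \<Longrightarrow> v \<in> F x \<Longrightarrow> \<phi> x (sc1 c v) = c * \<phi> x v"
  by (cases "x \<in> X") (auto simp: gcd_out dest!: gcd_lin simp: lin_functional_def cscale_eq)

lemma gcd_out2: "\<phi> \<in> Gamma_c_dual X F \<Longrightarrow> v \<notin> F x \<Longrightarrow> \<phi> x v = 0"
  by (cases "x \<in> X") (auto simp: gcd_out dest!: gcd_lin simp: lin_functional_def)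

lemma gcd_0: "\<phi> \<in> Gamma_c_dual X F \<Longrightarrow> \<phi> x 0 = 0"
proof (cases "x \<in> X")
  case True
  assume p: "\<phi> \<in> Gamma_c_dual X F"
  have "\<phi> x (sc1 0 0) = 0 * \<phi> x 0" using gcd_scale[OF p F0[OF True]] .
  moreover have "sc1 0 (0::nat \<Rightarrow> complex) = 0" by (simp add: fun_eq_iff sc1_apply)
  ultimately show ?thesis by simp
next
  case False
  then show "\<phi> \<in> Gamma_c_dual X F \<Longrightarrow> \<phi> x 0 = 0" by (simp add: gcd_out)
qed

lemma gcd_sum: "\<phi> \<in> Gamma_c_dual X F \<Longrightarrow> x \<in> X \<Longrightarrow> (\<And>i. i \<in> I \<Longrightarrow> g i \<in> F x) \<Longrightarrow>
    \<phi> x (sum g I) = (\<Sum>i\<in>I. \<phi> x (g i))"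
proof (induction I rule: infinite_finite_induct)
  case (infinite I) then show ?case by (metis gcd_0 sum.infinite)
next
  case empty then show ?case by (metis gcd_0 sum.empty)
next
  case (insert i I)
  have s: "sum g I \<in> F x" using V1.subspace_sum[OF Fsub[OF insert.prems(2)], of I g] insert.prems(3) by blast
  have "\<phi> x (sum g (insert i I)) = \<phi> x (g i + sum g I)" by (simp only: sum.insert[OF insert.hyps(1,2)])
  also have "\<dots> = \<phi> x (g i) + \<phi> x (sum g I)" using gcd_add[OF insert.prems(1) insert.prems(3)[OF insertI1] s] .
  also have "\<dots> = \<phi> x (g i) + (\<Sum>i\<in>I. \<phi> x (g i))" using insert.IH insert.prems by auto
  also have "\<dots> = (\<Sum>i\<in>insert i I. \<phi> x (g i))" by (simp only: sum.insert[OF insert.hyps(1,2)])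
  finally show ?case .
qed

lemma pairing_sum:
  assumes p: "\<phi> \<in> Gamma_c_dual X F" and P: "finite P" "{x\<in>X. \<phi> x \<noteq> (\<lambda>_. 0)} \<subseteq> P" "P \<subseteq> X"
  shows "pairing X \<phi> f = (\<Sum>x\<in>P. \<phi> x (f x))"
  unfolding pairing_def
  by (rule sum.mono_neutral_left) (use P in auto)

lemma pairing_cong: "(\<And>x. x \<in> X \<Longrightarrow> f x = g x) \<Longrightarrow> pairing X \<phi> f = pairing X \<phi> g"
  unfolding pairing_def by (rule sum.cong) auto

lemma pairing_sgl:
  assumes p: "\<phi> \<in> Gamma_c_dual X F" and x: "x \<in> X" and v: "v \<in> F x"
  shows "pairing X \<phi> (sgl x v) = \<phi> x v"
proof -
  have "pairing X \<phi> (sgl x v) = (\<Sum>z\<in>insert x {x\<in>X. \<phi> x \<noteq> (\<lambda>_. 0)}. \<phi> z (sgl x v z))"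
    using gcd_fin[OF p] x by (intro pairing_sum[OF p]) auto
  also have "\<dots> = (\<Sum>z\<in>insert x {x\<in>X. \<phi> x \<noteq> (\<lambda>_. 0)}. if z = x then \<phi> x v else 0)"
    by (rule sum.cong) (auto simp: sgl_def gcd_0[OF p])
  also have "\<dots> = \<phi> x v" using gcd_fin[OF p] by simp
  finally show ?thesis .
qed

lemma nondeg:
  assumes p1: "\<psi>1 \<in> Gamma_c_dual X F" and p2: "\<psi>2 \<in> Gamma_c_dual X F"
    and eq: "\<forall>f\<in>Gamma_sec X F. pairing X \<psi>1 f = pairing X \<psi>2 f"
  shows "\<psi>1 = \<psi>2"
proof (intro ext)
  fix x v
  show "\<psi>1 x v = \<psi>2 x v"
  proof (cases "x \<in> X \<and> v \<in> F x")
    case True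
    have g: "restrict (sgl x v) X \<in> Gamma_sec X F" using restrict_U sgl_U True by blast
    have "\<psi>1 x v = pairing X \<psi>1 (sgl x v)" using pairing_sgl[OF p1] True by simp
    also have "\<dots> = pairing X \<psi>1 (restrict (sgl x v) X)" by (rule pairing_cong) simp
    also have "\<dots> = pairing X \<psi>2 (restrict (sgl x v) X)" using eq g by blast
    also have "\<dots> = pairing X \<psi>2 (sgl x v)" by (rule pairing_cong) simp
    also have "\<dots> = \<psi>2 x v" using pairing_sgl[OF p2] True by simp
    finally show ?thesis .
  next
    case False
    then show ?thesis using gcd_out[OF p1] gcd_out[OF p2] gcd_out2[OF p1] gcd_out2[OF p2] by metis
  qed
qed

lemma dual_op_eq:
  assumes p: "\<phi> \<in> Gamma_c_dual X F" and q: "\<psi> \<in> Gamma_c_dual X F"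
    and eq: "\<forall>f\<in>Gamma_sec X F. pairing X \<psi> f = pairing X \<phi> (A f)"
  shows "dual_op X F A \<phi> = \<psi>"
  unfolding dual_op_def
proof (rule the_equality)
  show "\<psi> \<in> Gamma_c_dual X F \<and> (\<forall>f\<in>Gamma_sec X F. pairing X \<psi> f = pairing X \<phi> (A f))"
    using q eq by blast
  fix \<psi>' assume "\<psi>' \<in> Gamma_c_dual X F \<and> (\<forall>f\<in>Gamma_sec X F. pairing X \<psi>' f = pairing X \<phi> (A f))"
  then show "\<psi>' = \<psi>" using nondeg[OF _ q] eq by auto
qed

lemma pairing_add:
  assumes p: "\<phi> \<in> Gamma_c_dual X F" and f: "f \<in> U" and g: "g \<in> U"
  shows "pairing X \<phi> (f + g) = pairing X \<phi> f + pairing X \<phi> g"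
proof -
  let ?P = "{x\<in>X. \<phi> x \<noteq> (\<lambda>_. 0)}"
  have "pairing X \<phi> (f + g) = (\<Sum>x\<in>?P. \<phi> x (f x + g x))"
    using gcd_fin[OF p] by (subst pairing_sum[OF p]) auto
  also have "\<dots> = (\<Sum>x\<in>?P. \<phi> x (f x) + \<phi> x (g x))"
    by (rule sum.cong) (use f g in \<open>auto simp: U_def intro!: gcd_add[OF p]\<close>)
  also have "\<dots> = pairing X \<phi> f + pairing X \<phi> g"
    using gcd_fin[OF p] by (simp add: sum.distrib pairing_def)
  finally show ?thesis .
qed

lemma pairing_scale:
  assumes p: "\<phi> \<in> Gamma_c_dual X F" and f: "f \<in> U"
  shows "pairing X \<phi> (sc2 c f) = c * pairing X \<phi> f"
proof -
  let ?P = "{x\<in>X. \<phi> x \<noteq> (\<lambda>_. 0)}"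
  have "pairing X \<phi> (sc2 c f) = (\<Sum>x\<in>?P. \<phi> x (sc1 c (f x)))"
    using gcd_fin[OF p] by (subst pairing_sum[OF p]) (auto simp: sc2_apply)
  also have "\<dots> = (\<Sum>x\<in>?P. c * \<phi> x (f x))"
    by (rule sum.cong) (use f in \<open>auto simp: U_def intro!: gcd_scale[OF p]\<close>)
  also have "\<dots> = c * pairing X \<phi> f"
    by (simp add: sum_distrib_left pairing_def)
  finally show ?thesis .
qed

end



context S2
begin

lemma dual_exists:
  assumes p: "\<phi> \<in> Gamma_c_dual X F"
  shows "\<exists>\<psi>\<in>Gamma_c_dual X F. \<forall>f\<in>Gamma_sec X F. pairing X \<psi> f = pairing X \<phi> (A f)"
proof -
  define Z where "Z = {x\<in>X. \<phi> x \<noteq> (\<lambda>_. 0)}"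
  have Z: "finite Z" "Z \<subseteq> X" using gcd_fin[OF p] by (auto simp: Z_def)
  define KS where "KS = (\<Union>z\<in>Z. Kd z)"
  have KS: "finite KS" "KS \<subseteq> X" using Z Kd(1,2) by (auto simp: KS_def)
  define \<psi> where "\<psi> = (\<lambda>x v. if x \<in> X \<and> v \<in> F x then pairing X \<phi> (Bop (sgl x v)) else 0)"
  have psi_zero: "\<psi> x = (\<lambda>_. 0)" if x: "x \<notin> KS" for x
  proof
    fix v
    show "\<psi> x v = 0"
    proof (cases "x \<in> X \<and> v \<in> F x")
      case True
      have "pairing X \<phi> (Bop (sgl x v)) = (\<Sum>z\<in>Z. \<phi> z (Bop (sgl x v) z))"
        using pairing_sum[OF p Z(1) _ Z(2)] by (simp add: Z_def)
      also have "\<dots> = (\<Sum>z\<in>Z. \<phi> z 0)"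
      proof (rule sum.cong)
        fix z assume z: "z \<in> Z"
        have "Bop (sgl x v) z = 0"
          using Kd(3)[of z "sgl x v"] z Z(2) sgl_U True x by (auto simp: KS_def sgl_def)
        then show "\<phi> z (Bop (sgl x v) z) = \<phi> z 0" by simp
      qed simp
      also have "\<dots> = 0" by (simp add: gcd_0[OF p])
      finally show ?thesis by (simp add: \<psi>_def)
    qed (auto simp: \<psi>_def)
  qed
  have psi_gcd: "\<psi> \<in> Gamma_c_dual X F"
    unfolding Gamma_c_dual_def
  proof (intro CollectI conjI allI impI ballI)
    show "\<psi> x = (\<lambda>_. 0)" if "x \<notin> X" for x using that by (auto simp: \<psi>_def)
    show "finite {x. \<psi> x \<noteq> (\<lambda>_. 0)}"
      using psi_zero KS(1) by (metis (mono_tags, lifting) finite_subset mem_Collect_eq subsetI)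
    fix x assume x: "x \<in> X"
    show "lin_functional (F x) (\<psi> x)"
      unfolding lin_functional_def vadd_eq cscale_eq
    proof (intro conjI ballI allI impI)
      fix u v assume u: "u \<in> F x" and v: "v \<in> F x"
      have "\<psi> x (u + v) = pairing X \<phi> (Bop (sgl x u + sgl x v))"
        using x u v Fadd by (simp add: \<psi>_def sgl_add)
      also have "\<dots> = pairing X \<phi> (Bop (sgl x u) + Bop (sgl x v))"
        using Bop_add sgl_U x u v by metis
      also have "\<dots> = pairing X \<phi> (Bop (sgl x u)) + pairing X \<phi> (Bop (sgl x v))"
        using pairing_add[OF p] Bop_U sgl_U x u v by metis
      finally show "\<psi> x (u + v) = \<psi> x u + \<psi> x v" using x u v by (simp add: \<psi>_def)
    next
      fix c v assume v: "v \<in> F x"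
      have "\<psi> x (sc1 c v) = pairing X \<phi> (Bop (sc2 c (sgl x v)))"
        using x v Fscale by (simp add: \<psi>_def sgl_scale)
      also have "\<dots> = pairing X \<phi> (sc2 c (Bop (sgl x v)))"
        using Bop_scale sgl_U x v by metis
      also have "\<dots> = c * pairing X \<phi> (Bop (sgl x v))"
        using pairing_scale[OF p] Bop_U sgl_U x v by metis
      finally show "\<psi> x (sc1 c v) = c * \<psi> x v" using x v by (simp add: \<psi>_def)
    next
      fix v assume "v \<notin> F x"
      then show "\<psi> x v = 0" by (simp add: \<psi>_def)
    qed
  qed
  have "pairing X \<psi> f = pairing X \<phi> (A f)" if f: "f \<in> Gamma_sec X F" for f
  proof -
    define g where "g = zext f"
    have g: "g \<in> U" using zext_U[OF f] by (simp add: g_def)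
    have gx: "x \<in> X \<Longrightarrow> g x \<in> F x" for x using g by (simp add: U_def)
    have fx: "x \<in> X \<Longrightarrow> f x = g x" for x by (simp add: g_def zext_def)
    have sU: "x \<in> X \<Longrightarrow> sgl x (g x) \<in> U" for x using sgl_U gx by blast
    have "pairing X \<psi> f = (\<Sum>x\<in>KS. \<psi> x (f x))"
      using psi_zero KS by (intro pairing_sum[OF psi_gcd]) auto
    also have "\<dots> = (\<Sum>x\<in>KS. (\<Sum>z\<in>Z. \<phi> z (Bop (sgl x (g x)) z)))"
    proof (rule sum.cong)
      fix x assume x: "x \<in> KS"
      then have xX: "x \<in> X" using KS by auto
      have "\<psi> x (f x) = pairing X \<phi> (Bop (sgl x (g x)))"
        using xX gx fx by (simp add: \<psi>_def)
      also have "\<dots> = (\<Sum>z\<in>Z. \<phi> z (Bop (sgl x (g x)) z))"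
        using pairing_sum[OF p Z(1) _ Z(2)] by (simp add: Z_def)
      finally show "\<psi> x (f x) = (\<Sum>z\<in>Z. \<phi> z (Bop (sgl x (g x)) z))" .
    qed simp
    also have "\<dots> = (\<Sum>z\<in>Z. (\<Sum>x\<in>KS. \<phi> z (Bop (sgl x (g x)) z)))"
      by (rule sum.swap)
    also have "\<dots> = (\<Sum>z\<in>Z. \<phi> z (Bop g z))"
    proof (rule sum.cong)
      fix z assume z: "z \<in> Z"
      then have zX: "z \<in> X" using Z by auto
      have mem: "Bop (sgl i (g i)) z \<in> F z" if "i \<in> KS" for i
      proof -
        have "Bop (sgl i (g i)) \<in> U" using Bop_U sU that KS(2) by blast
        then show ?thesis using zX by (simp add: U_def)
      qed
      have "(\<Sum>x\<in>KS. \<phi> z (Bop (sgl x (g x)) z)) = \<phi> z (\<Sum>x\<in>KS. Bop (sgl x (g x)) z)"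
        by (rule sym[OF gcd_sum[OF p zX mem]])
      also have "(\<Sum>x\<in>KS. Bop (sgl x (g x)) z) = Bop (\<Sum>x\<in>KS. sgl x (g x)) z"
      proof -
        have bs: "Bop (\<Sum>x\<in>KS. sgl x (g x)) = (\<Sum>i\<in>KS. Bop (sgl i (g i)))"
          by (rule Bop_sum) (use KS(2) sU in blast)
        show ?thesis by (simp only: bs sum_app)
      qed
      also have "Bop (\<Sum>x\<in>KS. sgl x (g x)) z = Bop g z"
      proof (rule Kd_agree[OF zX])
        show "(\<Sum>x\<in>KS. sgl x (g x)) \<in> U" by (rule U_sum) (use KS(2) sU in blast)
        show "g \<in> U" by fact
        show "\<forall>w\<in>Kd z. (\<Sum>x\<in>KS. sgl x (g x)) w = g w"
          using sum_sgl[OF KS(1)] z by (auto simp: KS_def)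
      qed
      finally show "(\<Sum>x\<in>KS. \<phi> z (Bop (sgl x (g x)) z)) = \<phi> z (Bop g z)" .
    qed simp
    also have "\<dots> = pairing X \<phi> (Bop g)"
      using pairing_sum[OF p Z(1) _ Z(2)] by (simp add: Z_def)
    also have "\<dots> = pairing X \<phi> (A f)"
      by (rule pairing_cong) (simp add: Bop_def g_def restrict_zext[OF f])
    finally show ?thesis .
  qed
  then show ?thesis using psi_gcd by blast
qed

lemma easy_dir:
  assumes surj: "A ` Gamma_sec X F = Gamma_sec X F"
  shows "inj_on (dual_op X F A) (Gamma_c_dual X F)"
proof (rule inj_onI)
  fix \<phi>1 \<phi>2 assume p1: "\<phi>1 \<in> Gamma_c_dual X F" and p2: "\<phi>2 \<in> Gamma_c_dual X F"
    and eq: "dual_op X F A \<phi>1 = dual_op X F A \<phi>2"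
  obtain \<psi>1 where q1: "\<psi>1 \<in> Gamma_c_dual X F" "\<forall>f\<in>Gamma_sec X F. pairing X \<psi>1 f = pairing X \<phi>1 (A f)"
    using dual_exists[OF p1] by blast
  obtain \<psi>2 where q2: "\<psi>2 \<in> Gamma_c_dual X F" "\<forall>f\<in>Gamma_sec X F. pairing X \<psi>2 f = pairing X \<phi>2 (A f)"
    using dual_exists[OF p2] by blast
  have "\<psi>1 = \<psi>2" using dual_op_eq[OF p1 q1] dual_op_eq[OF p2 q2] eq by simp
  have "\<forall>g\<in>Gamma_sec X F. pairing X \<phi>1 g = pairing X \<phi>2 g"
  proof
    fix g assume "g \<in> Gamma_sec X F"
    then obtain f where f: "f \<in> Gamma_sec X F" "g = A f" using surj by blast
    then show "pairing X \<phi>1 g = pairing X \<phi>2 g"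
      using q1(2) q2(2) \<open>\<psi>1 = \<psi>2\<close> by metis
  qed
  then show "\<phi>1 = \<phi>2" using nondeg[OF p1 p2] by blast
qed

end



definition rs :: "'x set \<Rightarrow> ('x \<Rightarrow> nat \<Rightarrow> complex) \<Rightarrow> ('x \<Rightarrow> nat \<Rightarrow> complex)" where
  "rs S h = (\<lambda>z. if z \<in> S then h z else 0)"

lemma rs_add: "rs S (f + g) = rs S f + rs S g"
  by (rule ext) (simp add: rs_def)
lemma rs_scale: "rs S (sc2 c f) = sc2 c (rs S f)"
  by (rule ext) (simp add: rs_def sc2_apply fun_eq_iff sc1_apply)
lemma rs_0: "rs S 0 = 0"
  by (rule ext) (simp add: rs_def)
lemma rs_diff: "rs S (f - g) = rs S f - rs S g"
  by (rule ext) (simp add: rs_def)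
lemma rs_rs: "S \<subseteq> T \<Longrightarrow> rs S (rs T f) = rs S f"
  by (rule ext) (auto simp: rs_def)
lemma rs_id: "(\<forall>z. z \<notin> S \<longrightarrow> f z = 0) \<Longrightarrow> rs S f = f"
  by (rule ext) (auto simp: rs_def)
lemma rs_sgl: "finite S \<Longrightarrow> (\<Sum>x\<in>S. sgl x (h x)) = rs S h"
  by (rule ext) (simp add: sum_sgl rs_def)

context S2
begin

lemma rs_U: "f \<in> U \<Longrightarrow> rs S f \<in> U"
  by (auto simp: U_def rs_def F0)

lemma gcd_zero: "(\<lambda>x v. 0) \<in> Gamma_c_dual X F"
  by (simp add: Gamma_c_dual_def lin_functional_def)

lemma local_solv:
  assumes inj: "inj_on (dual_op X F A) (Gamma_c_dual X F)"
    and Xs: "finite Xs" "Xs \<subseteq> X" and KL: "\<And>x. x \<in> Xs \<Longrightarrow> Kd x \<subseteq> L"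
    and y: "y \<in> U"
  shows "\<exists>g\<in>U. (\<forall>z. z \<notin> L \<longrightarrow> g z = 0) \<and> (\<forall>x\<in>Xs. Bop g x = y x)"
proof (rule ccontr)
  assume nex: "\<not> ?thesis"
  define UL where "UL = {g\<in>U. \<forall>z. z \<notin> L \<longrightarrow> g z = 0}"
  define R where "R = (\<lambda>g. rs Xs (Bop g)) ` UL"
  define y0 where "y0 = rs Xs y"
  have UL_add: "g1 + g2 \<in> UL" if "g1 \<in> UL" "g2 \<in> UL" for g1 g2
    using that U_add by (auto simp: UL_def)
  have UL_scale: "sc2 c g \<in> UL" if "g \<in> UL" for g c
    using that U_scale by (auto simp: UL_def sc2_apply sc1_apply)
  have UL_0: "0 \<in> UL" using U_0 by (simp add: UL_def)
  have y0R: "y0 \<notin> R"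
  proof
    assume "y0 \<in> R"
    then obtain g where g: "g \<in> UL" "y0 = rs Xs (Bop g)" by (auto simp: R_def)
    have "\<forall>x\<in>Xs. Bop g x = y x"
    proof
      fix x assume "x \<in> Xs"
      then show "Bop g x = y x" using fun_cong[OF g(2), of x] by (simp add: y0_def rs_def)
    qed
    then show False using nex g(1) by (auto simp: UL_def)
  qed
  have Rsub: "V2.subspace R"
  proof (rule V2.subspaceI)
    show "0 \<in> R" using UL_0 Bop_0 rs_0 unfolding R_def by (metis image_eqI)
  next
    fix a b assume "a \<in> R" "b \<in> R"
    then obtain g1 g2 where g: "g1 \<in> UL" "g2 \<in> UL" "a = rs Xs (Bop g1)" "b = rs Xs (Bop g2)"
      by (auto simp: R_def)
    have "a + b = rs Xs (Bop (g1 + g2))"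
      using g Bop_add[of g1 g2] by (simp add: UL_def rs_add)
    then show "a + b \<in> R" using UL_add[OF g(1,2)] by (auto simp: R_def)
  next
    fix c a assume "a \<in> R"
    then obtain g where g: "g \<in> UL" "a = rs Xs (Bop g)" by (auto simp: R_def)
    have "sc2 c a = rs Xs (Bop (sc2 c g))"
      using g Bop_scale[of g c] by (simp add: UL_def rs_scale)
    then show "sc2 c a \<in> R" using UL_scale[OF g(1)] by (auto simp: R_def)
  qed
  obtain C where C: "C \<subseteq> R" "V2.independent C" "R \<subseteq> V2.span C"
    using V2.maximal_independent_subset[of R] by blast
  have spanC: "V2.span C \<subseteq> R" using V2.span_minimal[OF C(1) Rsub] .
  have ind: "V2.independent (insert y0 C)"
    using V2.independent_insertI[OF _ C(2)] y0R spanC by blast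
  define lam where "lam = V2C.construct (insert y0 C) (\<lambda>b. if b = y0 then 1 else 0)"
  have lin: "Vector_Spaces.linear sc2 ((*) :: complex \<Rightarrow> complex \<Rightarrow> complex) lam" unfolding lam_def by (rule V2C.linear_construct[OF ind])
  have lam_y0: "lam y0 = 1" unfolding lam_def using V2C.construct_basis[OF ind insertI1] by simp
  have lam_C: "lam c = 0" if "c \<in> C" for c
  proof -
    have "c \<noteq> y0" using that C(1) y0R by blast
    then show ?thesis unfolding lam_def using V2C.construct_basis[OF ind, of c] that by simp
  qed
  have lam_R: "lam r = 0" if "r \<in> R" for r
    using V2C.linear_eq_0_on_span[OF lin, of C r] lam_C C(3) that by blast
  define \<phi> where "\<phi> = (\<lambda>x v. if x \<in> Xs \<and> v \<in> F x then lam (sgl x v) else 0)"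
  have p: "\<phi> \<in> Gamma_c_dual X F"
    unfolding Gamma_c_dual_def
  proof (intro CollectI conjI allI impI ballI)
    show "\<phi> x = (\<lambda>_. 0)" if "x \<notin> X" for x
    proof -
      have "x \<notin> Xs" using that Xs(2) by blast
      then show ?thesis by (simp add: \<phi>_def)
    qed
    have "{x. \<phi> x \<noteq> (\<lambda>_. 0)} \<subseteq> Xs" by (auto simp: \<phi>_def)
    then show "finite {x. \<phi> x \<noteq> (\<lambda>_. 0)}" using Xs(1) finite_subset by blast
    fix x assume x: "x \<in> X"
    show "lin_functional (F x) (\<phi> x)"
      unfolding lin_functional_def vadd_eq cscale_eq
    proof (intro conjI ballI allI impI)
      fix u v assume u: "u \<in> F x" and v: "v \<in> F x"
      have uv: "u + v \<in> F x" using Fadd[OF x u v] .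
      show "\<phi> x (u + v) = \<phi> x u + \<phi> x v"
        using u v uv by (simp add: \<phi>_def sgl_add V2C.linear_add[OF lin])
    next
      fix c v assume v: "v \<in> F x"
      have cv: "sc1 c v \<in> F x" using Fscale[OF x v] .
      show "\<phi> x (sc1 c v) = c * \<phi> x v"
        using v cv by (simp add: \<phi>_def sgl_scale V2C.linear_scale[OF lin])
    next
      fix v assume "v \<notin> F x"
      then show "\<phi> x v = 0" by (simp add: \<phi>_def)
    qed
  qed
  have d0: "dual_op X F A (\<lambda>x v. 0) = (\<lambda>x v. 0)"
    by (rule dual_op_eq[OF gcd_zero gcd_zero]) (simp add: pairing_def)
  have d1: "dual_op X F A \<phi> = (\<lambda>x v. 0)"
  proof (rule dual_op_eq[OF p gcd_zero], intro ballI)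
    fix f assume f: "f \<in> Gamma_sec X F"
    define g where "g = zext f"
    have g: "g \<in> U" using zext_U[OF f] by (simp add: g_def)
    have Afx: "x \<in> X \<Longrightarrow> A f x = Bop g x" for x by (simp add: Bop_def g_def restrict_zext[OF f])
    have AfF: "x \<in> X \<Longrightarrow> A f x \<in> F x" for x using A_Gamma[OF f] by (auto simp: Gamma_sec_def)
    have "pairing X \<phi> (A f) = (\<Sum>x\<in>Xs. \<phi> x (A f x))"
      using Xs by (intro pairing_sum[OF p]) (auto simp: \<phi>_def)
    also have "\<dots> = (\<Sum>x\<in>Xs. lam (sgl x (Bop g x)))"
      by (rule sum.cong) (use Xs AfF Afx in \<open>auto simp: \<phi>_def\<close>)
    also have "\<dots> = lam (\<Sum>x\<in>Xs. sgl x (Bop g x))"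
      by (rule sym[OF V2C.linear_sum[OF lin]])
    also have "\<dots> = lam (rs Xs (Bop g))" by (simp only: rs_sgl[OF Xs(1)])
    also have "rs Xs (Bop g) = rs Xs (Bop (rs L g))"
    proof (rule ext)
      fix z show "rs Xs (Bop g) z = rs Xs (Bop (rs L g)) z"
      proof (cases "z \<in> Xs")
        case True
        have zX: "z \<in> X" using True Xs(2) by blast
        have "\<forall>w\<in>Kd z. g w = rs L g w" using KL[OF True] by (auto simp: rs_def)
        then have "Bop g z = Bop (rs L g) z"
          using Kd_agree[OF zX g rs_U[OF g]] by blast
        then show ?thesis by (simp add: rs_def)
      qed (simp add: rs_def)
    qed
    also have "lam (rs Xs (Bop (rs L g))) = 0"
    proof (rule lam_R)
      have "rs L g \<in> UL" using rs_U[OF g] by (auto simp: UL_def rs_def)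
      then show "rs Xs (Bop (rs L g)) \<in> R" by (auto simp: R_def)
    qed
    finally show "pairing X (\<lambda>x v. 0) f = pairing X \<phi> (A f)" by (simp add: pairing_def)
  qed
  have "\<phi> = (\<lambda>x v. 0)" using inj p gcd_zero d0 d1 by (metis inj_on_def)
  moreover have "(\<Sum>x\<in>Xs. \<phi> x (y x)) = 1"
  proof -
    have "(\<Sum>x\<in>Xs. \<phi> x (y x)) = (\<Sum>x\<in>Xs. lam (sgl x (y x)))"
      by (rule sum.cong) (use Xs y in \<open>auto simp: \<phi>_def U_def\<close>)
    also have "\<dots> = lam (\<Sum>x\<in>Xs. sgl x (y x))"
      by (rule sym[OF V2C.linear_sum[OF lin]])
    also have "\<dots> = lam y0" by (simp only: rs_sgl[OF Xs(1)] y0_def)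
    finally show ?thesis using lam_y0 by simp
  qed
  ultimately show False by simp
qed

end



lemma dim_mono_fin:
  fixes S T E :: "('x \<Rightarrow> 'a \<Rightarrow> complex) set"
  assumes "S \<subseteq> T" "T \<subseteq> V2.span E" "finite E"
  shows "V2.dim S \<le> V2.dim T"
proof -
  obtain B where B: "B \<subseteq> S" "V2.independent B" "S \<subseteq> V2.span B" "card B = V2.dim S"
    using V2.basis_exists by blast
  obtain C where C: "C \<subseteq> T" "V2.independent C" "T \<subseteq> V2.span C" "card C = V2.dim T"
    using V2.basis_exists by blast
  have fC: "finite C" using V2.independent_span_bound[OF assms(3) C(2)] C(1) assms(2) by blast
  have "card B \<le> card C" using V2.independent_span_bound[OF fC B(2)] B(1) assms(1) C(3) by blast
  then show ?thesis using B(4) C(4) by simp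
qed

lemma dim_eq_sub:
  fixes S T E :: "('x \<Rightarrow> 'a \<Rightarrow> complex) set"
  assumes sS: "V2.subspace S" and "S \<subseteq> T" "T \<subseteq> V2.span E" "finite E" "V2.dim S = V2.dim T"
  shows "T \<subseteq> S"
proof
  fix t assume t: "t \<in> T"
  show "t \<in> S"
  proof (rule ccontr)
    assume tS: "t \<notin> S"
    obtain B where B: "B \<subseteq> S" "V2.independent B" "S \<subseteq> V2.span B" "card B = V2.dim S"
      using V2.basis_exists by blast
    obtain C where C: "C \<subseteq> T" "V2.independent C" "T \<subseteq> V2.span C" "card C = V2.dim T"
      using V2.basis_exists by blast
    have fC: "finite C" using V2.independent_span_bound[OF assms(4) C(2)] C(1) assms(3) by blast
    have "V2.span B \<subseteq> S" using V2.span_minimal[OF B(1) sS] .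
    then have "t \<notin> V2.span B" using tS by blast
    then have ind: "V2.independent (insert t B)" using V2.independent_insertI B(2) by blast
    have "insert t B \<subseteq> V2.span C" using t B(1) assms(2) C(3) by blast
    then have fin: "finite (insert t B)" "card (insert t B) \<le> card C"
      using V2.independent_span_bound[OF fC ind] by auto
    have "t \<notin> B" using tS B(1) by blast
    then have "card (insert t B) = card B + 1" using fin(1) by simp
    then show False using fin(2) B(4) C(4) assms(5) by simp
  qed
qed

lemma sgl_linear: "Vector_Spaces.linear (sc1 :: complex \<Rightarrow> (nat \<Rightarrow> complex) \<Rightarrow> _) (sc2 :: complex \<Rightarrow> ('x \<Rightarrow> nat \<Rightarrow> complex) \<Rightarrow> _) (sgl x)"
  unfolding Vector_Spaces.linear_iff
  by (intro conjI allI vs1 vs2 sgl_add sgl_scale)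

context S2
begin

lemma UL_fin:
  assumes L: "finite L" "L \<subseteq> X"
  shows "\<exists>E. finite E \<and> {g\<in>U. \<forall>z. z \<notin> L \<longrightarrow> g z = 0} \<subseteq> V2.span E"
proof -
  define Bx where "Bx x = (SOME B. finite B \<and> F x = V1.span B)" for x
  have Bx: "finite (Bx x) \<and> F x = V1.span (Bx x)" if "x \<in> X" for x
    unfolding Bx_def using someI_ex[OF fd_span[OF fd[OF that]]] .
  define E where "E = (\<Union>x\<in>L. sgl x ` Bx x)"
  have fE: "finite E" using L Bx by (auto simp: E_def)
  have "g \<in> V2.span E" if g: "g \<in> U" "\<forall>z. z \<notin> L \<longrightarrow> g z = 0" for g
  proof -
    have "g = (\<Sum>x\<in>L. sgl x (g x))" using rs_sgl[OF L(1)] rs_id[OF g(2)] by simp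
    also have "\<dots> \<in> V2.span E"
    proof (rule V2.span_sum)
      fix x assume x: "x \<in> L"
      then have xX: "x \<in> X" using L by blast
      have "g x \<in> V1.span (Bx x)" using g(1) xX Bx[OF xX] by (auto simp: U_def)
      then have "sgl x (g x) \<in> V2.span (sgl x ` Bx x)"
        using V12.linear_spans_image[OF sgl_linear, of "{g x}" "Bx x"] by auto
      also have "V2.span (sgl x ` Bx x) \<subseteq> V2.span E"
        by (rule V2.span_mono) (use x in \<open>auto simp: E_def\<close>)
      finally show "sgl x (g x) \<in> V2.span E" .
    qed
    finally show ?thesis .
  qed
  then show ?thesis using fE by blast
qed

end



locale MLs = S2 X F A for X :: "'x set" and F and A +
  fixes y :: "'x \<Rightarrow> nat \<Rightarrow> complex"
  assumes inj: "inj_on (dual_op X F A) (Gamma_c_dual X F)"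
    and yU: "y \<in> U" and cX: "countable X" and ne: "X \<noteq> {}"
begin

definition e :: "nat \<Rightarrow> 'x" where "e = from_nat_into X"
definition Xn :: "nat \<Rightarrow> 'x set" where "Xn n = e ` {..n}"
definition L :: "nat \<Rightarrow> 'x set" where "L n = (\<Union>k\<le>n. Kd (e k))"

lemma e_X: "e n \<in> X" unfolding e_def using from_nat_into[OF ne] .
lemma X_e: "x \<in> X \<Longrightarrow> \<exists>n. e n = x" unfolding e_def using from_nat_into_surj[OF cX] by blast

lemma Xn_fin: "finite (Xn n)" by (simp add: Xn_def)
lemma Xn_X: "Xn n \<subseteq> X" using e_X by (auto simp: Xn_def)
lemma Xn_mono: "n \<le> m \<Longrightarrow> Xn n \<subseteq> Xn m" by (auto simp: Xn_def)
lemma L_fin: "finite (L n)" using Kd(1)[OF e_X] by (simp add: L_def)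
lemma L_X: "L n \<subseteq> X" using Kd(2)[OF e_X] by (auto simp: L_def)
lemma L_mono: "n \<le> m \<Longrightarrow> L n \<subseteq> L m" unfolding L_def by (rule UN_mono) auto
lemma KL: "x \<in> Xn n \<Longrightarrow> Kd x \<subseteq> L n" by (auto simp: L_def Xn_def)

definition S :: "nat \<Rightarrow> ('x \<Rightarrow> nat \<Rightarrow> complex) set" where
  "S m = {g\<in>U. (\<forall>z. z \<notin> L m \<longrightarrow> g z = 0) \<and> (\<forall>x\<in>Xn m. Bop g x = y x)}"
definition N :: "nat \<Rightarrow> ('x \<Rightarrow> nat \<Rightarrow> complex) set" where
  "N m = {g\<in>U. (\<forall>z. z \<notin> L m \<longrightarrow> g z = 0) \<and> (\<forall>x\<in>Xn m. Bop g x = 0)}"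
definition T :: "nat \<Rightarrow> nat \<Rightarrow> ('x \<Rightarrow> nat \<Rightarrow> complex) set" where
  "T n m = rs (L n) ` S m"
definition W :: "nat \<Rightarrow> nat \<Rightarrow> ('x \<Rightarrow> nat \<Rightarrow> complex) set" where
  "W n m = rs (L n) ` N m"

lemma S_ne: "S m \<noteq> {}"
  using local_solv[OF inj Xn_fin[of m] Xn_X[of m] KL[of _ m] yU] by (auto simp: S_def)

lemma agree_L: "x \<in> Xn n \<Longrightarrow> g \<in> U \<Longrightarrow> Bop (rs (L n) g) x = Bop g x"
proof -
  assume xn: "x \<in> Xn n" and g: "g \<in> U"
  have xX: "x \<in> X" using Xn_X xn by blast
  have "\<forall>z\<in>Kd x. rs (L n) g z = g z" using KL[OF xn] by (auto simp: rs_def)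
  then show ?thesis using Kd_agree[OF xX rs_U[OF g] g] by blast
qed

lemma restrict_S: "n \<le> m \<Longrightarrow> g \<in> S m \<Longrightarrow> rs (L n) g \<in> S n"
  using agree_L Xn_mono rs_U unfolding S_def by (auto simp: rs_def) (metis subsetD)+

lemma restrict_N: "n \<le> m \<Longrightarrow> g \<in> N m \<Longrightarrow> rs (L n) g \<in> N n"
  using agree_L Xn_mono rs_U unfolding N_def by (auto simp: rs_def) (metis subsetD)+

lemma S_diff: "g1 \<in> S m \<Longrightarrow> g2 \<in> S m \<Longrightarrow> g1 - g2 \<in> N m"
  using U_diff Bop_diff unfolding S_def N_def by auto

lemma S_add: "g \<in> S m \<Longrightarrow> h \<in> N m \<Longrightarrow> g + h \<in> S m"
  using U_add Bop_add unfolding S_def N_def by auto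

lemma T_mono: "n \<le> m \<Longrightarrow> m \<le> m' \<Longrightarrow> T n m' \<subseteq> T n m"
proof
  fix t assume nm: "n \<le> m" "m \<le> m'" and "t \<in> T n m'"
  then obtain g where g: "g \<in> S m'" "t = rs (L n) g" by (auto simp: T_def)
  have "rs (L m) g \<in> S m" using restrict_S[OF nm(2) g(1)] .
  moreover have "rs (L n) (rs (L m) g) = t" using g(2) rs_rs[OF L_mono[OF nm(1)]] by simp
  ultimately show "t \<in> T n m" unfolding T_def by blast
qed

lemma W_mono: "n \<le> m \<Longrightarrow> m \<le> m' \<Longrightarrow> W n m' \<subseteq> W n m"
proof
  fix t assume nm: "n \<le> m" "m \<le> m'" and "t \<in> W n m'"
  then obtain g where g: "g \<in> N m'" "t = rs (L n) g" by (auto simp: W_def)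
  have "rs (L m) g \<in> N m" using restrict_N[OF nm(2) g(1)] .
  moreover have "rs (L n) (rs (L m) g) = t" using g(2) rs_rs[OF L_mono[OF nm(1)]] by simp
  ultimately show "t \<in> W n m" unfolding W_def by blast
qed

lemma W_subspace: "V2.subspace (W n m)"
proof (rule V2.subspaceI)
  have "0 \<in> N m" using U_0 Bop_0 by (simp add: N_def)
  then show "0 \<in> W n m" unfolding W_def using rs_0 by (metis image_eqI)
next
  fix a b assume "a \<in> W n m" "b \<in> W n m"
  then obtain g1 g2 where g: "g1 \<in> N m" "g2 \<in> N m" "a = rs (L n) g1" "b = rs (L n) g2"
    by (auto simp: W_def)
  have "g1 + g2 \<in> N m" using g U_add Bop_add by (auto simp: N_def)
  moreover have "a + b = rs (L n) (g1 + g2)" using g by (simp add: rs_add)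
  ultimately show "a + b \<in> W n m" by (auto simp: W_def)
next
  fix c a assume "a \<in> W n m"
  then obtain g where g: "g \<in> N m" "a = rs (L n) g" by (auto simp: W_def)
  have "sc2 c g \<in> N m" using g U_scale Bop_scale by (auto simp: N_def sc2_apply sc1_apply)
  moreover have "sc2 c a = rs (L n) (sc2 c g)" using g by (simp add: rs_scale)
  ultimately show "sc2 c a \<in> W n m" by (auto simp: W_def)
qed

lemma W_UL: "W n m \<subseteq> {g\<in>U. \<forall>z. z \<notin> L n \<longrightarrow> g z = 0}"
  using rs_U by (auto simp: W_def N_def rs_def)

lemma W_stab: "\<exists>M\<ge>n. \<forall>m\<ge>M. W n m = W n M"
proof -
  obtain E where E: "finite E" "{g\<in>U. \<forall>z. z \<notin> L n \<longrightarrow> g z = 0} \<subseteq> V2.span E"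
    using UL_fin[OF L_fin L_X] by blast
  have WE: "W n m \<subseteq> V2.span E" for m using W_UL E(2) by blast
  define d where "d m = V2.dim (W n m)" for m
  define k0 where "k0 = (LEAST k. \<exists>m\<ge>n. d m = k)"
  have "\<exists>m\<ge>n. d m = k0" unfolding k0_def by (rule LeastI_ex) blast
  then obtain M where M: "M \<ge> n" "d M = k0" by blast
  have "W n m = W n M" if m: "m \<ge> M" for m
  proof
    show sub: "W n m \<subseteq> W n M" using W_mono[OF M(1) m] .
    have "d m \<le> d M" unfolding d_def using dim_mono_fin[OF sub WE E(1)] .
    moreover have "k0 \<le> d m" unfolding k0_def by (rule Least_le, rule exI[of _ m]) (use m M in auto)
    ultimately have "V2.dim (W n m) = V2.dim (W n M)" using M(2) by (simp add: d_def)
    then show "W n M \<subseteq> W n m" using dim_eq_sub[OF W_subspace sub WE E(1)] by blast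
  qed
  then show ?thesis using M(1) by blast
qed

definition Mf :: "nat \<Rightarrow> nat" where "Mf n = (SOME M. M \<ge> n \<and> (\<forall>m\<ge>M. W n m = W n M))"

lemma Mf: "Mf n \<ge> n" "m \<ge> Mf n \<Longrightarrow> W n m = W n (Mf n)"
  using someI_ex[OF W_stab[of n]] unfolding Mf_def by blast+

lemma T_stable:
  assumes m: "m \<ge> Mf n"
  shows "T n m = T n (Mf n)"
proof
  show "T n m \<subseteq> T n (Mf n)" using T_mono[OF Mf(1) m] .
  show "T n (Mf n) \<subseteq> T n m"
  proof
    fix a assume "a \<in> T n (Mf n)"
    then obtain g0 where g0: "g0 \<in> S (Mf n)" "a = rs (L n) g0" by (auto simp: T_def)
    obtain g1 where g1: "g1 \<in> S m" using S_ne by blast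
    define g2 where "g2 = rs (L (Mf n)) g1"
    have g2: "g2 \<in> S (Mf n)" using restrict_S[OF m g1] by (simp add: g2_def)
    have g2n: "rs (L n) g2 = rs (L n) g1" unfolding g2_def by (rule rs_rs[OF L_mono[OF Mf(1)]])
    have "rs (L n) (g0 - g2) \<in> W n (Mf n)" using S_diff[OF g0(1) g2] by (auto simp: W_def)
    then have "rs (L n) (g0 - g2) \<in> W n m" using Mf(2)[OF m] by simp
    then obtain h where h: "h \<in> N m" "rs (L n) (g0 - g2) = rs (L n) h" by (auto simp: W_def)
    have "rs (L n) (g1 + h) = rs (L n) g1 + (rs (L n) g0 - rs (L n) g2)"
      using h(2) by (simp add: rs_add rs_diff)
    also have "\<dots> = a" using g2n g0(2) by simp
    finally have "rs (L n) (g1 + h) = a" .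
    moreover have "g1 + h \<in> S m" using S_add[OF g1 h(1)] .
    ultimately show "a \<in> T n m" by (auto simp: T_def)
  qed
qed

definition Tinf :: "nat \<Rightarrow> ('x \<Rightarrow> nat \<Rightarrow> complex) set" where "Tinf n = T n (Mf n)"

lemma Tinf_ne: "Tinf n \<noteq> {}" using S_ne by (auto simp: Tinf_def T_def)
lemma Tinf_S: "Tinf n \<subseteq> S n" using restrict_S[OF Mf(1)] by (auto simp: Tinf_def T_def)

lemma Tinf_lift: "t \<in> Tinf n \<Longrightarrow> \<exists>s\<in>Tinf (Suc n). rs (L n) s = t"
proof -
  assume t: "t \<in> Tinf n"
  define m where "m = max (Mf n) (Mf (Suc n))"
  have m1: "m \<ge> Mf n" and m2: "m \<ge> Mf (Suc n)" by (auto simp: m_def)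
  have "t \<in> T n m" using t T_stable[OF m1] by (simp add: Tinf_def)
  then obtain g where g: "g \<in> S m" "t = rs (L n) g" by (auto simp: T_def)
  have "rs (L (Suc n)) g \<in> T (Suc n) m" by (auto simp: T_def g(1))
  then have "rs (L (Suc n)) g \<in> Tinf (Suc n)" using T_stable[OF m2] by (simp add: Tinf_def)
  moreover have "rs (L n) (rs (L (Suc n)) g) = t" using g(2) rs_rs[OF L_mono[of n "Suc n"]] by simp
  ultimately show ?thesis by blast
qed

definition sq :: "nat \<Rightarrow> ('x \<Rightarrow> nat \<Rightarrow> complex)" where
  "sq = rec_nat (SOME t. t \<in> Tinf 0) (\<lambda>n t. SOME s. s \<in> Tinf (Suc n) \<and> rs (L n) s = t)"

lemma sq_0: "sq 0 = (SOME t. t \<in> Tinf 0)" by (simp add: sq_def)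
lemma sq_Suc: "sq (Suc n) = (SOME s. s \<in> Tinf (Suc n) \<and> rs (L n) s = sq n)" by (simp add: sq_def)

lemma sq_in: "sq n \<in> Tinf n"
proof (induction n)
  case 0 then show ?case using Tinf_ne some_in_eq sq_0 by metis
next
  case (Suc n)
  then have "\<exists>s. s \<in> Tinf (Suc n) \<and> rs (L n) s = sq n" using Tinf_lift by blast
  then show ?case unfolding sq_Suc by (rule someI2_ex) blast
qed

lemma sq_rs: "rs (L n) (sq (Suc n)) = sq n"
proof -
  have "\<exists>s. s \<in> Tinf (Suc n) \<and> rs (L n) s = sq n" using Tinf_lift sq_in by blast
  then show ?thesis unfolding sq_Suc by (rule someI2_ex) blast
qed

lemma sq_S: "sq n \<in> S n" using sq_in Tinf_S by blast

lemma sq_supp: "z \<notin> L n \<Longrightarrow> sq n z = 0" using sq_S by (auto simp: S_def)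

lemma sq_rs_le: "k \<le> n \<Longrightarrow> rs (L k) (sq n) = sq k"
proof (induction n rule: dec_induct)
  case base
  then show ?case using sq_supp by (intro rs_id) blast
next
  case (step n)
  have "rs (L k) (sq (Suc n)) = rs (L k) (rs (L n) (sq (Suc n)))"
    using rs_rs[OF L_mono[OF step.hyps(1)]] by simp
  also have "\<dots> = sq k" using sq_rs step.IH by simp
  finally show ?case .
qed

definition fsol :: "'x \<Rightarrow> nat \<Rightarrow> complex" where
  "fsol z = (if \<exists>n. z \<in> L n then sq (LEAST n. z \<in> L n) z else 0)"

lemma rs_fsol: "rs (L n) fsol = sq n"
proof
  fix z
  show "rs (L n) fsol z = sq n z"
  proof (cases "z \<in> L n")
    case True
    define k where "k = (LEAST n. z \<in> L n)"
    have k: "k \<le> n" "z \<in> L k" using True Least_le[of "\<lambda>n. z \<in> L n"] LeastI[of "\<lambda>n. z \<in> L n"]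
      by (auto simp: k_def)
    have "fsol z = sq k z" using True by (auto simp: fsol_def k_def)
    also have "\<dots> = rs (L k) (sq n) z" using sq_rs_le[OF k(1)] by simp
    also have "\<dots> = sq n z" using k(2) by (simp add: rs_def)
    finally show ?thesis using True by (simp add: rs_def)
  next
    case False
    then show ?thesis using sq_supp by (simp add: rs_def)
  qed
qed

lemma fsol_U: "fsol \<in> U"
proof -
  have "sq n \<in> U" for n using sq_S by (auto simp: S_def)
  then show ?thesis by (auto simp: U_def fsol_def F0)
qed

lemma fsol_sol: "x \<in> X \<Longrightarrow> Bop fsol x = y x"
proof -
  assume x: "x \<in> X"
  then obtain n where n: "e n = x" using X_e by blast
  then have xn: "x \<in> Xn n" by (auto simp: Xn_def)
  have "Bop fsol x = Bop (rs (L n) fsol) x" using agree_L[OF xn fsol_U] by simp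
  also have "\<dots> = Bop (sq n) x" by (simp add: rs_fsol)
  also have "\<dots> = y x" using sq_S xn by (auto simp: S_def)
  finally show ?thesis .
qed

end



theorem theorem2p1:
  fixes X :: "'x set"
    and F :: "'x \<Rightarrow> (nat \<Rightarrow> complex) set"
    and A :: "('x \<Rightarrow> nat \<Rightarrow> complex) \<Rightarrow> ('x \<Rightarrow> nat \<Rightarrow> complex)"
  assumes "countable X" and "X \<noteq> {}"
    and "\<forall>x\<in>X. fd_csubspace (F x)"
    and "lin_op X F A"
    and "continuous_map (sect_top X F) (sect_top X F) A"
  shows "A ` Gamma_sec X F = Gamma_sec X F \<longleftrightarrow> inj_on (dual_op X F A) (Gamma_c_dual X F)"
proof -
  interpret S2 X F A using assms(3,4,5) by unfold_locales auto
  show ?thesis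
  proof
    assume "A ` Gamma_sec X F = Gamma_sec X F"
    then show "inj_on (dual_op X F A) (Gamma_c_dual X F)" by (rule easy_dir)
  next
    assume inj: "inj_on (dual_op X F A) (Gamma_c_dual X F)"
    show "A ` Gamma_sec X F = Gamma_sec X F"
    proof
      show "A ` Gamma_sec X F \<subseteq> Gamma_sec X F" using A_Gamma by blast
      show "Gamma_sec X F \<subseteq> A ` Gamma_sec X F"
      proof
        fix y assume y: "y \<in> Gamma_sec X F"
        interpret M: MLs X F A "zext y"
          using assms(1,2,3,4,5) inj zext_U[OF y] by unfold_locales auto
        have r: "restrict M.fsol X \<in> Gamma_sec X F" using restrict_U[OF M.fsol_U] .
        have "A (restrict M.fsol X) = y"
        proof (rule extensionalityI[of _ X])
          show "A (restrict M.fsol X) \<in> extensional X"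
            using A_Gamma[OF r] by (simp add: Gamma_sec_def PiE_def)
          show "y \<in> extensional X" using y by (simp add: Gamma_sec_def PiE_def)
          fix x assume x: "x \<in> X"
          have "A (restrict M.fsol X) x = Bop M.fsol x" using x by (simp add: Bop_def)
          also have "\<dots> = zext y x" using M.fsol_sol[OF x] .
          also have "\<dots> = y x" using x by (simp add: zext_def)
          finally show "A (restrict M.fsol X) x = y x" .
        qed
        then have "y = A (restrict M.fsol X)" by simp
        then show "y \<in> A ` Gamma_sec X F" using r by (rule image_eqI)
      qed
    qed
  qed
qed


end
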